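(* Let $P$ be a probability distribution of a random variable $\xi$, let $\mathcal X\subseteq\mathbb R^d$, and let $\lambda>0$. Assume: (i) for every $\xi$, the loss $x\mapsto \ell(x;\xi)$ is $G$-Lipschitz continuous and $L$-smooth on $\mathcal X$; (ii) $\psi:\mathbb R\to[0,+\infty]$ is convex, $\psi(1)=0$, $\psi(t)=+\infty$ for all $t<0$, and its conjugate $\psi^*(t)=\sup_{s\in\mathbb R}(st-\psi(s))$ is $M$-smooth. Define $$\mathcal L(x,\eta)=\mathbb E_{\xi\sim P}\Big[\lambda\psi^*\Big(\frac{\ell(x;\xi)-\eta}{\lambda}\Big)+\eta\Big],\qquad \Psi(x)=\min_{\eta\in\mathbb R}\mathcal L(x,\eta).$$ Then $\Psi$ is differentiable, and $\nabla\Psi(x)=\nabla_x\mathcal L(x,\eta)$ for any $\eta\in\arg\min_{\eta'\in\mathbb R}\mathcal L(x,\eta')$.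
   Context: $\Psi$ is the (dual form of the) penalized $\psi$-divergence distributionally robust optimization objective $\sup_Q\{\mathbb E_{\xi\sim Q}\ell(x;\xi)-\lambda d_\psi(Q,P)\}$, where $d_\psi(Q,P)=\int\psi(dQ/dP)\,dP$. A function is $L$-smooth if it is differentiable with $L$-Lipschitz gradient. *)

theory Defs
  imports "HOL-Analysis.Analysis" "HOL-Probability.Probability"
begin

definition ereal_convex :: "(real \<Rightarrow> ereal) \<Rightarrow> bool" where
  "ereal_convex \<psi> \<longleftrightarrow>
     (\<forall>s t u. 0 < u \<and> u < 1 \<longrightarrow>
        \<psi> (u * s + (1 - u) * t) \<le> ereal u * \<psi> s + ereal (1 - u) * \<psi> t)"

definition convex_conjugate :: "(real \<Rightarrow> ereal) \<Rightarrow> real \<Rightarrow> ereal" where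
  "convex_conjugate \<psi> t = (SUP s. ereal (s * t) - \<psi> s)"

definition smooth_on :: "real \<Rightarrow> 'a::euclidean_space set \<Rightarrow> ('a \<Rightarrow> real) \<Rightarrow> bool" where
  "smooth_on L S f \<longleftrightarrow>
     (\<exists>g :: 'a \<Rightarrow> 'a.
        (\<forall>x\<in>S. (f has_derivative (\<lambda>h. g x \<bullet> h)) (at x within S)) \<and>
        (\<forall>x\<in>S. \<forall>y\<in>S. norm (g x - g y) \<le> L * norm (x - y)))"

text \<open>The penalized DRO objective L(x,eta) = E_P[lambda psi*((l(x;xi)-eta)/lambda) + eta],
  where the real-valued function phi represents psi*.\<close>
definition dro_L :: "'b measure \<Rightarrow> real \<Rightarrow> (real \<Rightarrow> real) \<Rightarrow> ('a \<Rightarrow> 'b \<Rightarrow> real) \<Rightarrow> 'a \<Rightarrow> real \<Rightarrow> real" where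
  "dro_L P lam \<phi> loss x \<eta> = (\<integral>\<xi>. lam * \<phi> ((loss x \<xi> - \<eta>) / lam) + \<eta> \<partial>P)"

text \<open>Psi(x) = min over eta of L(x,eta) (taken as the infimum; attainment is assumed).\<close>
definition dro_Psi :: "'b measure \<Rightarrow> real \<Rightarrow> (real \<Rightarrow> real) \<Rightarrow> ('a \<Rightarrow> 'b \<Rightarrow> real) \<Rightarrow> 'a \<Rightarrow> real" where
  "dro_Psi P lam \<phi> loss x = (INF \<eta>. dro_L P lam \<phi> loss x \<eta>)"

end

theory Submission
  imports Defs
begin


lemma smooth_real_get:
  fixes \<phi> :: "real \<Rightarrow> real"
  assumes "smooth_on M UNIV \<phi>"
  obtains p where "\<And>t. (\<phi> has_real_derivative p t) (at t)" "\<And>s t. \<bar>p s - p t\<bar> \<le> M * \<bar>s - t\<bar>"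
proof -
  from assms obtain g :: "real \<Rightarrow> real" where
    d: "\<forall>x\<in>UNIV. (\<phi> has_derivative (\<lambda>h. g x \<bullet> h)) (at x within UNIV)" and
    l: "\<forall>x\<in>UNIV. \<forall>y\<in>UNIV. norm (g x - g y) \<le> M * norm (x - y)"
    unfolding smooth_on_def by blast
  have "(\<phi> has_real_derivative g t) (at t)" for t
  proof -
    have "(\<lambda>h. h * g t) = (*) (g t)" by (auto simp: mult.commute)
    then show ?thesis using d unfolding has_field_derivative_def by simp
  qed
  moreover have "\<bar>g s - g t\<bar> \<le> M * \<bar>s - t\<bar>" for s t using l by simp
  ultimately show ?thesis using that by blast
qed

lemma phi_taylor:
  fixes \<phi> p :: "real \<Rightarrow> real"
  assumes d: "\<And>t. (\<phi> has_real_derivative p t) (at t)" and l: "\<And>s t. \<bar>p s - p t\<bar> \<le> M * \<bar>s - t\<bar>"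
  shows "\<bar>\<phi> b - \<phi> a - p a * (b - a)\<bar> \<le> M * (b - a)^2"
proof (cases a b rule: linorder_cases)
  case less
  then obtain z where z: "a < z" "z < b" "\<phi> b - \<phi> a = (b - a) * p z"
    using MVT2[of a b \<phi> p] d by blast
  have "\<phi> b - \<phi> a - p a * (b - a) = (p z - p a) * (b - a)"
    using z by (simp add: algebra_simps)
  then have "\<bar>\<phi> b - \<phi> a - p a * (b - a)\<bar> = \<bar>p z - p a\<bar> * \<bar>b - a\<bar>"
    by (simp add: abs_mult)
  also have "\<dots> \<le> (M * \<bar>z - a\<bar>) * \<bar>b - a\<bar>" using l by (intro mult_right_mono) auto
  also have "\<dots> \<le> (M * \<bar>b - a\<bar>) * \<bar>b - a\<bar>"
  proof -
    have "M \<ge> 0" using l[of 1 0] by simp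
    then show ?thesis using z by (intro mult_right_mono mult_left_mono) auto
  qed
  finally show ?thesis by (simp add: power2_eq_square mult.assoc)
next
  case equal then show ?thesis by simp
next
  case greater
  then obtain z where z: "b < z" "z < a" "\<phi> a - \<phi> b = (a - b) * p z"
    using MVT2[of b a \<phi> p] d by blast
  have "\<phi> b - \<phi> a - p a * (b - a) = (p z - p a) * (b - a)"
    using z by (simp add: algebra_simps)
  then have "\<bar>\<phi> b - \<phi> a - p a * (b - a)\<bar> = \<bar>p z - p a\<bar> * \<bar>b - a\<bar>"
    by (simp add: abs_mult)
  also have "\<dots> \<le> (M * \<bar>z - a\<bar>) * \<bar>b - a\<bar>" using l by (intro mult_right_mono) auto
  also have "\<dots> \<le> (M * \<bar>b - a\<bar>) * \<bar>b - a\<bar>"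
  proof -
    have "M \<ge> 0" using l[of 1 0] by simp
    then show ?thesis using z by (intro mult_right_mono mult_left_mono) auto
  qed
  finally show ?thesis by (simp add: power2_eq_square mult.assoc)
qed

lemma conj_convex:
  fixes \<psi> :: "real \<Rightarrow> ereal" and \<phi> :: "real \<Rightarrow> real"
  assumes nn: "\<And>t. \<psi> t \<ge> 0" and conj: "\<And>t. convex_conjugate \<psi> t = ereal (\<phi> t)"
  shows "convex_on UNIV \<phi>"
proof (rule convex_onI)
  show "convex (UNIV :: real set)" by simp
  fix t a b :: real assume t: "0 < t" "t < 1"
  define u where "u = 1 - t"
  have u: "0 < u" "u < 1" using t u_def by auto
  have up: "ereal (s * t) - \<psi> s \<le> ereal (\<phi> t)" for s t
    using conj[of t] unfolding convex_conjugate_def by (metis SUP_upper UNIV_I)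
  have "ereal (s * (u * a + (1 - u) * b)) - \<psi> s \<le> ereal (u * \<phi> a + (1 - u) * \<phi> b)" for s
  proof (cases "\<psi> s")
    case (real r)
    have 1: "s * a - r \<le> \<phi> a" using up[of s a] real by simp
    have 2: "s * b - r \<le> \<phi> b" using up[of s b] real by simp
    have "u * (s * a - r) + (1 - u) * (s * b - r) \<le> u * \<phi> a + (1 - u) * \<phi> b"
      using 1 2 u by (intro add_mono mult_left_mono) auto
    then show ?thesis using real by (simp add: algebra_simps)
  next
    case PInf then show ?thesis by simp
  next
    case MInf then show ?thesis using nn[of s] by simp
  qed
  then have "convex_conjugate \<psi> (u * a + (1 - u) * b) \<le> ereal (u * \<phi> a + (1 - u) * \<phi> b)"
    unfolding convex_conjugate_def by (rule SUP_least)
  then show "\<phi> ((1 - t) *\<^sub>R a + t *\<^sub>R b) \<le> (1 - t) * \<phi> a + t * \<phi> b"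
    using conj[of "u * a + (1 - u) * b"] u_def by simp
qed

lemma phi_tangent:
  fixes \<phi> p :: "real \<Rightarrow> real"
  assumes "convex_on UNIV \<phi>" "\<And>t. (\<phi> has_real_derivative p t) (at t)"
  shows "\<phi> b \<ge> \<phi> a + p a * (b - a)"
  using convex_on_imp_above_tangent[of UNIV \<phi> a b "p a"] assms by simp



lemma deriv_transfer:
  fixes h1 h2 :: "'a::euclidean_space \<Rightarrow> real"
  assumes d: "(h2 has_derivative D) (at x within X)"
    and b: "\<And>y. y \<in> X \<Longrightarrow> \<bar>h1 y - h1 x - (h2 y - h2 x)\<bar> \<le> K * (norm (y - x))^2"
  shows "(h1 has_derivative D) (at x within X)"
proof -
  define r where "r y = h1 y - h2 y" for y
  have "((\<lambda>y. (r y - r x - 0) /\<^sub>R norm (y - x)) \<longlongrightarrow> 0) (at x within X)"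
  proof (rule Lim_null_comparison)
    show "eventually (\<lambda>y. norm ((r y - r x - 0) /\<^sub>R norm (y - x)) \<le> \<bar>K\<bar> * norm (y - x)) (at x within X)"
      unfolding eventually_at
    proof (intro exI[of _ 1] conjI ballI impI)
      fix y assume y: "y \<in> X" "y \<noteq> x \<and> dist y x < 1"
      then have n: "norm (y - x) > 0" by auto
      have "\<bar>r y - r x\<bar> \<le> \<bar>K\<bar> * (norm (y - x))^2"
        using b[OF y(1)] unfolding r_def
        by (smt (verit, ccfv_SIG) abs_ge_self mult_right_mono zero_le_power2)
      then have "\<bar>r y - r x\<bar> / norm (y - x) \<le> \<bar>K\<bar> * norm (y - x)"
        using n by (simp add: divide_le_eq power2_eq_square mult.assoc)
      then show "norm ((r y - r x - 0) /\<^sub>R norm (y - x)) \<le> \<bar>K\<bar> * norm (y - x)"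
        by (simp add: divide_inverse_commute abs_mult)
    qed auto
    have "((\<lambda>y. \<bar>K\<bar> * norm (y - x)) \<longlongrightarrow> \<bar>K\<bar> * norm (x - x)) (at x within X)"
      by (intro tendsto_intros)
    then show "((\<lambda>y. \<bar>K\<bar> * norm (y - x)) \<longlongrightarrow> 0) (at x within X)" by simp
  qed
  then have "(r has_derivative (\<lambda>_. 0)) (at x within X)"
    unfolding has_derivative_within by (simp add: divide_inverse_commute)
  from has_derivative_add[OF d this] have "((\<lambda>y. h2 y + r y) has_derivative D) (at x within X)"
    by simp
  moreover have "(\<lambda>y. h2 y + r y) = h1" unfolding r_def by auto
  ultimately show ?thesis by simp
qed



lemma dirs_orth:
  fixes X :: "'a::euclidean_space set"
  assumes orth: "\<And>u ys. (\<forall>n. ys n \<in> X \<and> ys n \<noteq> x) \<Longrightarrow> ys \<longlonglongrightarrow> x \<Longrightarrow>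
      (\<lambda>n. (ys n - x) /\<^sub>R norm (ys n - x)) \<longlonglongrightarrow> u \<Longrightarrow> v \<bullet> u = 0"
  shows "((\<lambda>y. v \<bullet> ((y - x) /\<^sub>R norm (y - x))) \<longlongrightarrow> 0) (at x within X)"
proof (rule ccontr)
  define q where "q y = v \<bullet> ((y - x) /\<^sub>R norm (y - x))" for y
  assume "\<not> ?thesis"
  then have "\<not> (q \<longlongrightarrow> 0) (at x within X)" unfolding q_def .
  then obtain e where e: "e > 0" "\<not> eventually (\<lambda>y. dist (q y) 0 < e) (at x within X)"
    unfolding tendsto_iff by blast
  then have "\<forall>d>0. \<exists>y\<in>X. y \<noteq> x \<and> dist y x < d \<and> \<bar>q y\<bar> \<ge> e"
    unfolding eventually_at by (auto simp: not_less) (meson not_less)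
  then have "\<forall>n. \<exists>y. y \<in> X \<and> y \<noteq> x \<and> dist y x < inverse (real (Suc n)) \<and> \<bar>q y\<bar> \<ge> e"
    by (metis inverse_positive_iff_positive of_nat_0_less_iff zero_less_Suc)
  then obtain ys where ys: "\<And>n. ys n \<in> X" "\<And>n. ys n \<noteq> x"
    "\<And>n. dist (ys n) x < inverse (real (Suc n))" "\<And>n. \<bar>q (ys n)\<bar> \<ge> e"
    by metis
  have "(\<lambda>n. ys n - x) \<longlonglongrightarrow> 0"
  proof (rule Lim_null_comparison)
    show "\<forall>\<^sub>F n in sequentially. norm (ys n - x) \<le> inverse (real (Suc n))"
      using ys(3) by (simp add: dist_norm less_imp_le)
    show "(\<lambda>n. inverse (real (Suc n))) \<longlonglongrightarrow> 0" by (rule LIMSEQ_inverse_real_of_nat)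
  qed
  then have ysx: "ys \<longlonglongrightarrow> x" by (simp add: LIM_zero_iff)
  define d where "d n = (ys n - x) /\<^sub>R norm (ys n - x)" for n
  have "d n \<in> sphere 0 1" for n using ys(2) by (simp add: d_def)
  then obtain l r where r: "strict_mono r" "(d \<circ> r) \<longlonglongrightarrow> l"
    using compact_sphere[of "0::'a" 1] unfolding compact_def by metis
  have "v \<bullet> l = 0"
  proof (rule orth[of "ys \<circ> r"])
    show "\<forall>n. (ys \<circ> r) n \<in> X \<and> (ys \<circ> r) n \<noteq> x" using ys by auto
    show "(ys \<circ> r) \<longlonglongrightarrow> x" using LIMSEQ_subseq_LIMSEQ[OF ysx r(1)] .
    show "(\<lambda>n. ((ys \<circ> r) n - x) /\<^sub>R norm ((ys \<circ> r) n - x)) \<longlonglongrightarrow> l"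
      using r(2) by (simp add: d_def comp_def)
  qed
  moreover have "(\<lambda>n. \<bar>v \<bullet> (d \<circ> r) n\<bar>) \<longlonglongrightarrow> \<bar>v \<bullet> l\<bar>"
    by (intro tendsto_intros r(2))
  then have "e \<le> \<bar>v \<bullet> l\<bar>"
    by (rule LIMSEQ_le_const) (use ys(4) in \<open>auto simp: q_def d_def\<close>)
  ultimately show False using e by simp
qed



lemma hdw_iff:
  fixes f :: "'a::euclidean_space \<Rightarrow> real"
  shows "(f has_derivative (\<lambda>h. g \<bullet> h)) (at x within X) \<longleftrightarrow>
    ((\<lambda>y. (f y - f x - g \<bullet> (y - x)) /\<^sub>R norm (y - x)) \<longlongrightarrow> 0) (at x within X)"
proof -
  have e: "(\<lambda>y. (1 / norm (y - x)) *\<^sub>R (f y - (f x + g \<bullet> (y - x))))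
      = (\<lambda>y. (f y - f x - g \<bullet> (y - x)) /\<^sub>R norm (y - x))"
    by (rule ext) (simp add: divide_inverse algebra_simps)
  show ?thesis unfolding has_derivative_within e using bounded_linear_inner_right by blast
qed

lemma core:
  fixes M :: "'b measure" and X :: "'a::euclidean_space set" and f :: "'a \<Rightarrow> 'b \<Rightarrow> real"
    and w :: "'b \<Rightarrow> real"
  assumes x: "x \<in> X" and wint: "integrable M w"
    and fm: "\<And>y. y \<in> X \<Longrightarrow> (\<lambda>\<xi>. f y \<xi>) \<in> borel_measurable M"
    and fl: "\<And>\<xi> y. \<xi> \<in> space M \<Longrightarrow> y \<in> X \<Longrightarrow> \<bar>f y \<xi> - f x \<xi>\<bar> \<le> G * norm (y - x)"
    and fd: "\<And>\<xi>. \<xi> \<in> space M \<Longrightarrow> \<exists>g. ((\<lambda>y. f y \<xi>) has_derivative (\<lambda>h. g \<bullet> h)) (at x within X)"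
  shows "\<exists>A. ((\<lambda>y. \<integral>\<xi>. w \<xi> * (f y \<xi> - f x \<xi>) \<partial>M) has_derivative (\<lambda>h. A \<bullet> h)) (at x within X)"
proof -
  define dir where "dir y = (y - x) /\<^sub>R norm (y - x)" for y
  define U where "U = {u. \<exists>ys. (\<forall>n. ys n \<in> X \<and> ys n \<noteq> x) \<and> ys \<longlonglongrightarrow> x \<and> (\<lambda>n. dir (ys n)) \<longlonglongrightarrow> u}"
  define gg where "gg \<xi> = (SOME g. ((\<lambda>y. f y \<xi>) has_derivative (\<lambda>h. g \<bullet> h)) (at x within X))" for \<xi>
  have gg: "((\<lambda>y. f y \<xi>) has_derivative (\<lambda>h. gg \<xi> \<bullet> h)) (at x within X)" if "\<xi> \<in> space M" for \<xi>
    unfolding gg_def using someI_ex[OF fd[OF that]] .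
  have wm: "w \<in> borel_measurable M" using wint by (rule borel_measurable_integrable)
  have lim_u: "(\<lambda>n. (f (ys n) \<xi> - f x \<xi>) / norm (ys n - x)) \<longlonglongrightarrow> gg \<xi> \<bullet> u"
    if \<xi>: "\<xi> \<in> space M" and ys: "\<forall>n. ys n \<in> X \<and> ys n \<noteq> x" "ys \<longlonglongrightarrow> x" "(\<lambda>n. dir (ys n)) \<longlonglongrightarrow> u"
    for \<xi> ys u
  proof -
    have "((\<lambda>y. (f y \<xi> - f x \<xi> - gg \<xi> \<bullet> (y - x)) /\<^sub>R norm (y - x)) \<longlongrightarrow> 0) (at x within X)"
      using hdw_iff[THEN iffD1, OF gg[OF \<xi>]] by blast
    moreover have "filterlim ys (at x within X) sequentially"
      using ys by (simp add: filterlim_at)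
    ultimately have "(\<lambda>n. (f (ys n) \<xi> - f x \<xi> - gg \<xi> \<bullet> (ys n - x)) /\<^sub>R norm (ys n - x)) \<longlonglongrightarrow> 0"
      by (rule filterlim_compose)
    moreover have "(\<lambda>n. gg \<xi> \<bullet> dir (ys n)) \<longlonglongrightarrow> gg \<xi> \<bullet> u" by (intro tendsto_intros ys(3))
    ultimately have "(\<lambda>n. (f (ys n) \<xi> - f x \<xi> - gg \<xi> \<bullet> (ys n - x)) /\<^sub>R norm (ys n - x)
        + gg \<xi> \<bullet> dir (ys n)) \<longlonglongrightarrow> 0 + gg \<xi> \<bullet> u"
      by (rule tendsto_add)
    moreover have "(f (ys n) \<xi> - f x \<xi> - gg \<xi> \<bullet> (ys n - x)) /\<^sub>R norm (ys n - x) + gg \<xi> \<bullet> dir (ys n)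
        = (f (ys n) \<xi> - f x \<xi>) / norm (ys n - x)" for n
      by (simp add: dir_def inner_scaleR_right divide_inverse algebra_simps)
    ultimately show ?thesis by simp
  qed
  have U_mb: "(\<lambda>\<xi>. gg \<xi> \<bullet> u) \<in> borel_measurable M \<and> (\<forall>\<xi>\<in>space M. \<bar>gg \<xi> \<bullet> u\<bar> \<le> G)"
    if "u \<in> U" for u
  proof -
    from that obtain ys where ys: "\<forall>n. ys n \<in> X \<and> ys n \<noteq> x" "ys \<longlonglongrightarrow> x" "(\<lambda>n. dir (ys n)) \<longlonglongrightarrow> u"
      unfolding U_def by blast
    have "(\<lambda>\<xi>. gg \<xi> \<bullet> u) \<in> borel_measurable M"
    proof (rule borel_measurable_LIMSEQ_real)
      show "(\<lambda>n. (f (ys n) \<xi> - f x \<xi>) / norm (ys n - x)) \<longlonglongrightarrow> gg \<xi> \<bullet> u" if "\<xi> \<in> space M" for \<xi>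
        using lim_u[OF that ys] .
      show "(\<lambda>\<xi>. (f (ys n) \<xi> - f x \<xi>) / norm (ys n - x)) \<in> borel_measurable M" for n
        using fm[of "ys n"] fm[OF x] ys(1) by (auto intro!: borel_measurable_divide borel_measurable_diff)
    qed
    moreover have "\<bar>gg \<xi> \<bullet> u\<bar> \<le> G" if \<xi>: "\<xi> \<in> space M" for \<xi>
    proof (rule LIMSEQ_le_const2)
      show "(\<lambda>n. \<bar>(f (ys n) \<xi> - f x \<xi>) / norm (ys n - x)\<bar>) \<longlonglongrightarrow> \<bar>gg \<xi> \<bullet> u\<bar>"
        by (intro tendsto_intros lim_u[OF \<xi> ys])
      have "\<bar>(f (ys n) \<xi> - f x \<xi>) / norm (ys n - x)\<bar> \<le> G" for n
      proof -
        have "norm (ys n - x) > 0" using ys(1) by auto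
        then show ?thesis using fl[OF \<xi>, of "ys n"] ys(1) by (simp add: abs_div pos_divide_le_eq)
      qed
      then show "\<exists>N. \<forall>n\<ge>N. \<bar>(f (ys n) \<xi> - f x \<xi>) / norm (ys n - x)\<bar> \<le> G" by blast
    qed
    ultimately show ?thesis by blast
  qed
  define Pr where "Pr v \<longleftrightarrow> (\<lambda>\<xi>. gg \<xi> \<bullet> v) \<in> borel_measurable M \<and> (\<exists>C. \<forall>\<xi>\<in>space M. \<bar>gg \<xi> \<bullet> v\<bar> \<le> C)" for v
  have span_prop: "Pr v" if "v \<in> span U" for v
  proof (rule span_induct[OF that])
    show "subspace (Collect Pr)"
      unfolding subspace_def
    proof (intro conjI ballI allI)
      show "0 \<in> Collect Pr" by (auto simp: Pr_def)
      fix v1 v2 assume "v1 \<in> Collect Pr" "v2 \<in> Collect Pr"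
      then obtain C1 C2 where m: "(\<lambda>\<xi>. gg \<xi> \<bullet> v1) \<in> borel_measurable M" "(\<lambda>\<xi>. gg \<xi> \<bullet> v2) \<in> borel_measurable M"
        and C: "\<forall>\<xi>\<in>space M. \<bar>gg \<xi> \<bullet> v1\<bar> \<le> C1" "\<forall>\<xi>\<in>space M. \<bar>gg \<xi> \<bullet> v2\<bar> \<le> C2"
        unfolding Pr_def by blast
      have "\<forall>\<xi>\<in>space M. \<bar>gg \<xi> \<bullet> (v1 + v2)\<bar> \<le> C1 + C2"
        using C by (simp add: inner_add_right) (meson abs_triangle_ineq add_mono order_trans)
      moreover have "(\<lambda>\<xi>. gg \<xi> \<bullet> (v1 + v2)) \<in> borel_measurable M"
        using m by (simp add: inner_add_right)
      ultimately show "v1 + v2 \<in> Collect Pr" unfolding Pr_def by blast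
    next
      fix c :: real and v assume "v \<in> Collect Pr"
      then obtain C where m: "(\<lambda>\<xi>. gg \<xi> \<bullet> v) \<in> borel_measurable M"
        and C: "\<forall>\<xi>\<in>space M. \<bar>gg \<xi> \<bullet> v\<bar> \<le> C"
        unfolding Pr_def by blast
      have "\<forall>\<xi>\<in>space M. \<bar>gg \<xi> \<bullet> (c *\<^sub>R v)\<bar> \<le> \<bar>c\<bar> * C"
        using C by (simp add: abs_mult mult_left_mono)
      moreover have "(\<lambda>\<xi>. gg \<xi> \<bullet> (c *\<^sub>R v)) \<in> borel_measurable M"
        using m by simp
      ultimately show "c *\<^sub>R v \<in> Collect Pr" unfolding Pr_def by blast
    qed
    show "Pr v" if "v \<in> U" for v using U_mb[OF that] unfolding Pr_def by blast
  qed
  obtain B where B: "B \<subseteq> span U" "pairwise orthogonal B" "\<And>b. b \<in> B \<Longrightarrow> norm b = 1"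
    "independent B" "span B = span U"
    using orthonormal_basis_subspace[OF subspace_span[of U]] by metis
  have finB: "finite B" using B(4) by (rule independent_imp_finite)
  have Bo: "b \<bullet> b' = (if b = b' then 1 else 0)" if "b \<in> B" "b' \<in> B" for b b'
  proof (cases "b = b'")
    case True
    then show ?thesis using B(3)[OF that(1)] power2_norm_eq_inner[of b] by simp
  next
    case False
    then show ?thesis using B(2) that unfolding pairwise_def orthogonal_def by auto
  qed
  define a where "a \<xi> = (\<Sum>b\<in>B. (gg \<xi> \<bullet> b) *\<^sub>R b)" for \<xi>
  have orthB: "(gg \<xi> - a \<xi>) \<bullet> b' = 0" if "b' \<in> B" for \<xi> b'
  proof -
    have "(\<Sum>b\<in>B. (gg \<xi> \<bullet> b) * (b \<bullet> b')) = (\<Sum>b\<in>B. if b = b' then gg \<xi> \<bullet> b else 0)"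
      by (rule sum.cong) (auto simp: Bo that)
    also have "\<dots> = gg \<xi> \<bullet> b'" using finB that by (simp add: sum.delta)
    finally show ?thesis
      by (simp add: a_def inner_diff_left inner_sum_left)
  qed
  have orthU: "(gg \<xi> - a \<xi>) \<bullet> u = 0" if "u \<in> U" for \<xi> u
  proof -
    have "u \<in> span B" using B(5) that span_superset by blast
    then show ?thesis
    proof (rule span_induct)
      show "subspace {v. (gg \<xi> - a \<xi>) \<bullet> v = 0}"
        unfolding subspace_def by (simp add: inner_add_right)
    qed (use orthB in auto)
  qed
  have ad: "((\<lambda>y. f y \<xi>) has_derivative (\<lambda>h. a \<xi> \<bullet> h)) (at x within X)" if \<xi>: "\<xi> \<in> space M" for \<xi>
  proof -
    have t1: "((\<lambda>y. (f y \<xi> - f x \<xi> - gg \<xi> \<bullet> (y - x)) /\<^sub>R norm (y - x)) \<longlongrightarrow> 0) (at x within X)"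
      using hdw_iff[THEN iffD1, OF gg[OF \<xi>]] by blast
    have t2: "((\<lambda>y. (gg \<xi> - a \<xi>) \<bullet> ((y - x) /\<^sub>R norm (y - x))) \<longlongrightarrow> 0) (at x within X)"
      apply (rule dirs_orth, rule orthU) unfolding U_def dir_def by blast
    have "((\<lambda>y. (f y \<xi> - f x \<xi> - gg \<xi> \<bullet> (y - x)) /\<^sub>R norm (y - x)
       + (gg \<xi> - a \<xi>) \<bullet> ((y - x) /\<^sub>R norm (y - x))) \<longlongrightarrow> 0 + 0) (at x within X)"
      by (rule tendsto_add[OF t1 t2])
    moreover have "(f y \<xi> - f x \<xi> - gg \<xi> \<bullet> (y - x)) /\<^sub>R norm (y - x)
       + (gg \<xi> - a \<xi>) \<bullet> ((y - x) /\<^sub>R norm (y - x))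
       = (f y \<xi> - f x \<xi> - a \<xi> \<bullet> (y - x)) /\<^sub>R norm (y - x)" for y
      by (simp add: inner_scaleR_right inner_diff_left divide_inverse algebra_simps)
    ultimately have "((\<lambda>y. (f y \<xi> - f x \<xi> - a \<xi> \<bullet> (y - x)) /\<^sub>R norm (y - x)) \<longlongrightarrow> 0) (at x within X)"
      by simp
    then show ?thesis unfolding hdw_iff .
  qed
  have "\<forall>b\<in>B. \<exists>C. \<forall>\<xi>\<in>space M. \<bar>gg \<xi> \<bullet> b\<bar> \<le> C" using span_prop B(1) unfolding Pr_def by blast
  then obtain Cb where Cb: "\<And>b \<xi>. b \<in> B \<Longrightarrow> \<xi> \<in> space M \<Longrightarrow> \<bar>gg \<xi> \<bullet> b\<bar> \<le> Cb b"
    using bchoice by metis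
  have gbm: "(\<lambda>\<xi>. gg \<xi> \<bullet> b) \<in> borel_measurable M" if "b \<in> B" for b
    using span_prop B(1) that unfolding Pr_def by blast
  define Ca where "Ca = (\<Sum>b\<in>B. \<bar>Cb b\<bar>)"
  have a_bd: "norm (a \<xi>) \<le> Ca" if \<xi>: "\<xi> \<in> space M" for \<xi>
  proof -
    have "norm (a \<xi>) \<le> (\<Sum>b\<in>B. norm ((gg \<xi> \<bullet> b) *\<^sub>R b))" unfolding a_def by (rule norm_sum)
    also have "\<dots> \<le> (\<Sum>b\<in>B. \<bar>Cb b\<bar>)"
    proof (rule sum_mono)
      fix b assume b: "b \<in> B"
      show "norm ((gg \<xi> \<bullet> b) *\<^sub>R b) \<le> \<bar>Cb b\<bar>" using Cb[OF b \<xi>] B(3)[OF b] by simp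
    qed
    finally show ?thesis unfolding Ca_def .
  qed
  have a_inner: "a \<xi> \<bullet> h = (\<Sum>b\<in>B. (gg \<xi> \<bullet> b) * (b \<bullet> h))" for \<xi> h
    by (simp add: a_def inner_sum_left)
  have a_meas: "(\<lambda>\<xi>. a \<xi> \<bullet> h) \<in> borel_measurable M" for h
    unfolding a_inner using gbm by (intro borel_measurable_sum borel_measurable_times) auto
  have int_b: "integrable M (\<lambda>\<xi>. w \<xi> * (gg \<xi> \<bullet> b))" if b: "b \<in> B" for b
  proof (rule Bochner_Integration.integrable_bound)
    show "integrable M (\<lambda>\<xi>. \<bar>Cb b\<bar> * w \<xi>)" using wint by simp
    show "(\<lambda>\<xi>. w \<xi> * (gg \<xi> \<bullet> b)) \<in> borel_measurable M" using wm gbm[OF b] by simp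
    show "AE \<xi> in M. norm (w \<xi> * (gg \<xi> \<bullet> b)) \<le> norm (\<bar>Cb b\<bar> * w \<xi>)"
    proof (rule AE_I2)
      fix \<xi> assume \<xi>: "\<xi> \<in> space M"
      have "\<bar>gg \<xi> \<bullet> b\<bar> \<le> \<bar>Cb b\<bar>" using Cb[OF b \<xi>] by linarith
      then have "\<bar>w \<xi>\<bar> * \<bar>gg \<xi> \<bullet> b\<bar> \<le> \<bar>w \<xi>\<bar> * \<bar>Cb b\<bar>"
        by (rule mult_left_mono) simp
      then show "norm (w \<xi> * (gg \<xi> \<bullet> b)) \<le> norm (\<bar>Cb b\<bar> * w \<xi>)"
        by (simp only: real_norm_def abs_mult abs_abs mult.commute)
    qed
  qed
  have int_a: "integrable M (\<lambda>\<xi>. w \<xi> * (a \<xi> \<bullet> h))" for h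
  proof (rule Bochner_Integration.integrable_bound)
    show "integrable M (\<lambda>\<xi>. (Ca * norm h) * w \<xi>)" using wint by simp
    show "(\<lambda>\<xi>. w \<xi> * (a \<xi> \<bullet> h)) \<in> borel_measurable M" using wm a_meas by simp
    show "AE \<xi> in M. norm (w \<xi> * (a \<xi> \<bullet> h)) \<le> norm ((Ca * norm h) * w \<xi>)"
    proof (rule AE_I2)
      fix \<xi> assume \<xi>: "\<xi> \<in> space M"
      have "\<bar>a \<xi> \<bullet> h\<bar> \<le> Ca * norm h"
        using Cauchy_Schwarz_ineq2[of "a \<xi>" h] a_bd[OF \<xi>] by (meson mult_right_mono norm_ge_zero order_trans)
      then have "\<bar>a \<xi> \<bullet> h\<bar> \<le> \<bar>Ca * norm h\<bar>" by linarith
      then have "\<bar>w \<xi>\<bar> * \<bar>a \<xi> \<bullet> h\<bar> \<le> \<bar>w \<xi>\<bar> * \<bar>Ca * norm h\<bar>"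
        by (rule mult_left_mono) simp
      then show "norm (w \<xi> * (a \<xi> \<bullet> h)) \<le> norm ((Ca * norm h) * w \<xi>)"
        by (simp only: real_norm_def abs_mult[of "w \<xi>"] abs_mult[of "Ca * norm h"] mult.commute)
    qed
  qed
  define A where "A = (\<Sum>b\<in>B. (\<integral>\<xi>. w \<xi> * (gg \<xi> \<bullet> b) \<partial>M) *\<^sub>R b)"
  have A_eq: "A \<bullet> h = (\<integral>\<xi>. w \<xi> * (a \<xi> \<bullet> h) \<partial>M)" for h
  proof -
    have "A \<bullet> h = (\<Sum>b\<in>B. (\<integral>\<xi>. w \<xi> * (gg \<xi> \<bullet> b) \<partial>M) * (b \<bullet> h))"
      by (simp add: A_def inner_sum_left)
    also have "\<dots> = (\<Sum>b\<in>B. (\<integral>\<xi>. w \<xi> * (gg \<xi> \<bullet> b) * (b \<bullet> h) \<partial>M))"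
      by simp
    also have "\<dots> = (\<integral>\<xi>. (\<Sum>b\<in>B. w \<xi> * (gg \<xi> \<bullet> b) * (b \<bullet> h)) \<partial>M)"
      by (rule Bochner_Integration.integral_sum[symmetric]) (use int_b in auto)
    also have "\<dots> = (\<integral>\<xi>. w \<xi> * (a \<xi> \<bullet> h) \<partial>M)"
      by (simp add: a_inner sum_distrib_left mult.assoc)
    finally show ?thesis .
  qed
  define F where "F y = (\<integral>\<xi>. w \<xi> * (f y \<xi> - f x \<xi>) \<partial>M)" for y
  have "(F has_derivative (\<lambda>h. A \<bullet> h)) (at x within X)"
    unfolding hdw_iff
  proof (intro Lim_within_LIMSEQ allI impI)
    fix S assume S: "(\<forall>n. S n \<noteq> x \<and> S n \<in> X) \<and> S \<longlonglongrightarrow> x"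
    have Sf: "filterlim S (at x within X) sequentially" using S by (simp add: filterlim_at)
    define q where "q n \<xi> = w \<xi> * ((f (S n) \<xi> - f x \<xi> - a \<xi> \<bullet> (S n - x)) / norm (S n - x))" for n \<xi>
    have int_f: "integrable M (\<lambda>\<xi>. w \<xi> * (f y \<xi> - f x \<xi>))" if y: "y \<in> X" for y
    proof (rule Bochner_Integration.integrable_bound)
      show "integrable M (\<lambda>\<xi>. (G * norm (y - x)) * w \<xi>)" using wint by simp
      show "(\<lambda>\<xi>. w \<xi> * (f y \<xi> - f x \<xi>)) \<in> borel_measurable M" using wm fm[OF y] fm[OF x] by simp
      show "AE \<xi> in M. norm (w \<xi> * (f y \<xi> - f x \<xi>)) \<le> norm ((G * norm (y - x)) * w \<xi>)"
      proof (rule AE_I2)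
        fix \<xi> assume \<xi>: "\<xi> \<in> space M"
        have "\<bar>f y \<xi> - f x \<xi>\<bar> \<le> \<bar>G * norm (y - x)\<bar>" using fl[OF \<xi> y] by linarith
        then show "norm (w \<xi> * (f y \<xi> - f x \<xi>)) \<le> norm ((G * norm (y - x)) * w \<xi>)"
          by (simp add: abs_mult mult.commute mult_left_mono)
      qed
    qed
    have eq: "(F (S n) - F x - A \<bullet> (S n - x)) /\<^sub>R norm (S n - x) = (\<integral>\<xi>. q n \<xi> \<partial>M)" for n
    proof -
      have "F (S n) - F x - A \<bullet> (S n - x)
          = (\<integral>\<xi>. w \<xi> * (f (S n) \<xi> - f x \<xi>) \<partial>M) - (\<integral>\<xi>. w \<xi> * (a \<xi> \<bullet> (S n - x)) \<partial>M)"
        by (simp add: F_def A_eq)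
      also have "\<dots> = (\<integral>\<xi>. w \<xi> * (f (S n) \<xi> - f x \<xi>) - w \<xi> * (a \<xi> \<bullet> (S n - x)) \<partial>M)"
        by (rule Bochner_Integration.integral_diff[symmetric]) (use int_f S int_a in auto)
      finally have e1: "F (S n) - F x - A \<bullet> (S n - x)
          = (\<integral>\<xi>. w \<xi> * (f (S n) \<xi> - f x \<xi>) - w \<xi> * (a \<xi> \<bullet> (S n - x)) \<partial>M)" .
      have "(\<integral>\<xi>. q n \<xi> \<partial>M)
          = (\<integral>\<xi>. (w \<xi> * (f (S n) \<xi> - f x \<xi>) - w \<xi> * (a \<xi> \<bullet> (S n - x))) / norm (S n - x) \<partial>M)"
        by (rule Bochner_Integration.integral_cong) (simp_all add: q_def right_diff_distrib times_divide_eq_right)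
      also have "\<dots> = (\<integral>\<xi>. w \<xi> * (f (S n) \<xi> - f x \<xi>) - w \<xi> * (a \<xi> \<bullet> (S n - x)) \<partial>M) / norm (S n - x)"
        by (rule integral_divide_zero)
      also have "\<dots> = (F (S n) - F x - A \<bullet> (S n - x)) / norm (S n - x)"
        by (simp only: e1)
      also have "\<dots> = (F (S n) - F x - A \<bullet> (S n - x)) /\<^sub>R norm (S n - x)"
        by (simp add: divide_inverse_commute)
      finally show ?thesis by simp
    qed
    have "(\<lambda>n. \<integral>\<xi>. q n \<xi> \<partial>M) \<longlonglongrightarrow> (\<integral>\<xi>. 0 \<partial>M)"
    proof (rule integral_dominated_convergence[where w = "\<lambda>\<xi>. \<bar>w \<xi>\<bar> * (\<bar>G\<bar> + Ca)"])
      show "(\<lambda>\<xi>. 0::real) \<in> borel_measurable M" by simp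
      show "q n \<in> borel_measurable M" for n
        unfolding q_def using wm fm[of "S n"] fm[OF x] S a_meas[of "S n - x"]
        by (auto intro!: borel_measurable_times borel_measurable_divide borel_measurable_diff)
      show "integrable M (\<lambda>\<xi>. \<bar>w \<xi>\<bar> * (\<bar>G\<bar> + Ca))" using wint by simp
      show "AE \<xi> in M. (\<lambda>n. q n \<xi>) \<longlonglongrightarrow> 0"
      proof (rule AE_I2)
        fix \<xi> assume \<xi>: "\<xi> \<in> space M"
        have "((\<lambda>y. (f y \<xi> - f x \<xi> - a \<xi> \<bullet> (y - x)) /\<^sub>R norm (y - x)) \<longlongrightarrow> 0) (at x within X)"
          using hdw_iff[THEN iffD1, OF ad[OF \<xi>]] by blast
        from filterlim_compose[OF this Sf]
        have "(\<lambda>n. (f (S n) \<xi> - f x \<xi> - a \<xi> \<bullet> (S n - x)) /\<^sub>R norm (S n - x)) \<longlonglongrightarrow> 0" .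
        then have "(\<lambda>n. w \<xi> * ((f (S n) \<xi> - f x \<xi> - a \<xi> \<bullet> (S n - x)) / norm (S n - x))) \<longlonglongrightarrow> 0"
          by (intro tendsto_mult_right_zero) (simp add: divide_inverse mult.commute)
        then show "(\<lambda>n. q n \<xi>) \<longlonglongrightarrow> 0" unfolding q_def .
      qed
      show "AE \<xi> in M. norm (q n \<xi>) \<le> \<bar>w \<xi>\<bar> * (\<bar>G\<bar> + Ca)" for n
      proof (rule AE_I2)
        fix \<xi> assume \<xi>: "\<xi> \<in> space M"
        have N: "norm (S n - x) > 0" using S by auto
        have "\<bar>a \<xi> \<bullet> (S n - x)\<bar> \<le> Ca * norm (S n - x)"
          using Cauchy_Schwarz_ineq2[of "a \<xi>" "S n - x"] a_bd[OF \<xi>] by (meson mult_right_mono norm_ge_zero order_trans)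
        moreover have "\<bar>f (S n) \<xi> - f x \<xi>\<bar> \<le> \<bar>G\<bar> * norm (S n - x)"
        proof -
          have "G * norm (S n - x) \<le> \<bar>G\<bar> * norm (S n - x)"
            by (rule mult_right_mono) auto
          moreover have "S n \<in> X" using S by blast
          ultimately show ?thesis using fl[OF \<xi>, of "S n"] by linarith
        qed
        ultimately have "\<bar>f (S n) \<xi> - f x \<xi> - a \<xi> \<bullet> (S n - x)\<bar> \<le> (\<bar>G\<bar> + Ca) * norm (S n - x)"
          by (simp add: algebra_simps)
        then have "\<bar>(f (S n) \<xi> - f x \<xi> - a \<xi> \<bullet> (S n - x)) / norm (S n - x)\<bar> \<le> \<bar>G\<bar> + Ca"
          using N by (simp add: abs_div pos_divide_le_eq)
        then have "\<bar>w \<xi>\<bar> * \<bar>(f (S n) \<xi> - f x \<xi> - a \<xi> \<bullet> (S n - x)) / norm (S n - x)\<bar> \<le> \<bar>w \<xi>\<bar> * (\<bar>G\<bar> + Ca)"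
          by (rule mult_left_mono) simp
        then show "norm (q n \<xi>) \<le> \<bar>w \<xi>\<bar> * (\<bar>G\<bar> + Ca)"
          unfolding q_def real_norm_def abs_mult .
      qed
    qed
    then show "(\<lambda>n. (F (S n) - F x - A \<bullet> (S n - x)) /\<^sub>R norm (S n - x)) \<longlonglongrightarrow> 0"
      unfolding eq by simp
  qed
  then show ?thesis unfolding F_def by blast
qed



lemma int_lin:
  assumes "prob_space P" "integrable P f"
  shows "(\<integral>\<xi>. lam * f \<xi> + c \<partial>P) = lam * (\<integral>\<xi>. f \<xi> \<partial>P) + (c::real)"
proof -
  interpret prob_space P by fact
  have "(\<integral>\<xi>. lam * f \<xi> + c \<partial>P) = (\<integral>\<xi>. lam * f \<xi> \<partial>P) + (\<integral>\<xi>. c \<partial>P)"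
    by (rule Bochner_Integration.integral_add) (use assms(2) in auto)
  then show ?thesis by (simp add: prob_space)
qed

lemma int_approx:
  fixes g h :: "'b \<Rightarrow> real"
  assumes "prob_space P" "integrable P g" "integrable P h" "\<And>\<xi>. \<xi> \<in> space P \<Longrightarrow> \<bar>g \<xi> - h \<xi>\<bar> \<le> C"
  shows "\<bar>(\<integral>\<xi>. g \<xi> \<partial>P) - (\<integral>\<xi>. h \<xi> \<partial>P)\<bar> \<le> C"
proof -
  interpret prob_space P by fact
  have "(\<integral>\<xi>. g \<xi> \<partial>P) - (\<integral>\<xi>. h \<xi> \<partial>P) = (\<integral>\<xi>. g \<xi> - h \<xi> \<partial>P)"
    by (rule Bochner_Integration.integral_diff[symmetric]) (use assms in auto)
  also have "\<bar>\<dots>\<bar> \<le> (\<integral>\<xi>. \<bar>g \<xi> - h \<xi>\<bar> \<partial>P)" by (rule integral_abs_bound)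
  also have "\<dots> \<le> (\<integral>\<xi>. C \<partial>P)"
    by (rule integral_mono) (use assms in auto)
  also have "\<dots> = C" by (simp add: prob_space)
  finally show ?thesis .
qed

lemma foc_zero:
  fixes c K :: real
  assumes K: "K \<ge> 0" and h: "\<And>t. c * t + K * t^2 \<ge> 0"
  shows "c = 0"
proof (rule ccontr)
  assume c: "c \<noteq> 0"
  define t where "t = - c / (K + 1)"
  have tK: "t * (K + 1) = - c" using K by (simp add: t_def)
  have "(K + 1)^2 * (c * t + K * t^2) = c * (t * (K + 1)) * (K + 1) + K * (t * (K + 1))^2"
    by (simp add: power2_eq_square algebra_simps)
  also have "\<dots> = - (c^2)" unfolding tK by (simp add: power2_eq_square algebra_simps)
  finally have "(K + 1)^2 * (c * t + K * t^2) < 0" using c by simp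
  moreover have "(K + 1)^2 * (c * t + K * t^2) \<ge> 0" using h[of t] by simp
  ultimately show False by simp
qed



theorem lemma2p6:
  fixes P :: "'b measure"
    and X :: "'a::euclidean_space set"
    and loss :: "'a \<Rightarrow> 'b \<Rightarrow> real"
    and \<psi> :: "real \<Rightarrow> ereal"
    and \<phi> :: "real \<Rightarrow> real"
    and lam G L M :: real
  assumes P: "prob_space P"
    and lam: "lam > 0"
    and lip: "\<And>\<xi>. \<xi> \<in> space P \<Longrightarrow> G-lipschitz_on X (\<lambda>x. loss x \<xi>)"
    and sm: "\<And>\<xi>. \<xi> \<in> space P \<Longrightarrow> smooth_on L X (\<lambda>x. loss x \<xi>)"
    and meas: "\<And>x. x \<in> X \<Longrightarrow> (\<lambda>\<xi>. loss x \<xi>) \<in> borel_measurable P"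
    and psi_nonneg: "\<And>t. \<psi> t \<ge> 0"
    and psi_convex: "ereal_convex \<psi>"
    and psi_one: "\<psi> 1 = 0"
    and psi_neg: "\<And>t. t < 0 \<Longrightarrow> \<psi> t = \<infinity>"
    and conj: "\<And>t. convex_conjugate \<psi> t = ereal (\<phi> t)"
    and conj_smooth: "smooth_on M UNIV \<phi>"
    and integ: "\<And>x \<eta>. x \<in> X \<Longrightarrow> integrable P (\<lambda>\<xi>. \<phi> ((loss x \<xi> - \<eta>) / lam))"
    and attained: "\<And>x. x \<in> X \<Longrightarrow> \<exists>\<eta>. \<forall>\<eta>'. dro_L P lam \<phi> loss x \<eta> \<le> dro_L P lam \<phi> loss x \<eta>'"
  shows "(\<forall>x\<in>X. dro_Psi P lam \<phi> loss differentiable (at x within X)) \<and>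
         (\<forall>x\<in>X. \<forall>\<eta>. (\<forall>\<eta>'. dro_L P lam \<phi> loss x \<eta> \<le> dro_L P lam \<phi> loss x \<eta>') \<longrightarrow>
            (\<lambda>y. dro_L P lam \<phi> loss y \<eta>) differentiable (at x within X) \<and>
            (\<forall>D. ((\<lambda>y. dro_L P lam \<phi> loss y \<eta>) has_derivative D) (at x within X) \<longrightarrow>
                 (dro_Psi P lam \<phi> loss has_derivative D) (at x within X)))"
proof -
  interpret prob_space P by (rule P)
  obtain p where pd: "\<And>t. (\<phi> has_real_derivative p t) (at t)"
    and pl: "\<And>s t. \<bar>p s - p t\<bar> \<le> M * \<bar>s - t\<bar>"
    using smooth_real_get[OF conj_smooth] by blast
  have M0: "M \<ge> 0" using pl[of 1 0] by simp
  have cvx: "convex_on UNIV \<phi>" using conj_convex psi_nonneg conj by blast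
  have tay: "\<bar>\<phi> v - \<phi> u - p u * (v - u)\<bar> \<le> M * (v - u)^2" for u v using phi_taylor[OF pd pl] .
  have tan: "\<phi> v \<ge> \<phi> u + p u * (v - u)" for u v using phi_tangent[OF cvx pd] .
  have pcont: "continuous_on UNIV p"
    by (rule lipschitz_on_continuous_on[of M], rule lipschitz_onI) (use pl M0 in \<open>auto simp: dist_real_def\<close>)
  have Leq: "dro_L P lam \<phi> loss y e = lam * (\<integral>\<xi>. \<phi> ((loss y \<xi> - e) / lam) \<partial>P) + e" if "y \<in> X" for y e
    unfolding dro_L_def using int_lin[OF P integ[OF that]] .
  have lipb: "\<bar>loss y \<xi> - loss x \<xi>\<bar> \<le> G * norm (y - x)" if "\<xi> \<in> space P" "y \<in> X" "x \<in> X" for \<xi> y x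
    using lipschitz_onD[OF lip[OF that(1)] that(2) that(3)] by (simp add: dist_real_def dist_norm)
  have key: "\<exists>A. ((\<lambda>y. dro_L P lam \<phi> loss y \<eta>) has_derivative (\<lambda>h. A \<bullet> h)) (at x within X) \<and>
      (\<forall>D. ((\<lambda>y. dro_L P lam \<phi> loss y \<eta>) has_derivative D) (at x within X) \<longrightarrow>
                 (dro_Psi P lam \<phi> loss has_derivative D) (at x within X))"
    if x: "x \<in> X" and min: "\<forall>\<eta>'. dro_L P lam \<phi> loss x \<eta> \<le> dro_L P lam \<phi> loss x \<eta>'" for x \<eta>
  proof -
    define a where "a \<xi> = (loss x \<xi> - \<eta>) / lam" for \<xi>
    define w where "w \<xi> = p (a \<xi>)" for \<xi>
    define J where "J y e = (\<integral>\<xi>. \<phi> ((loss y \<xi> - e) / lam) \<partial>P)" for y e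
    have wm: "w \<in> borel_measurable P"
      unfolding w_def a_def
      by (intro borel_measurable_continuous_on[OF pcont] borel_measurable_divide borel_measurable_diff meas[OF x]) auto
    have a1: "a \<xi> + 1 = (loss x \<xi> - (\<eta> - lam)) / lam" for \<xi>
      using lam by (simp add: a_def field_simps)
    have wint: "integrable P w"
    proof (rule Bochner_Integration.integrable_bound)
      show "integrable P (\<lambda>\<xi>. \<bar>\<phi> ((loss x \<xi> - (\<eta> - lam)) / lam)\<bar> + \<bar>\<phi> (a \<xi>)\<bar> + M)"
        unfolding a_def using integ[OF x] by (intro Bochner_Integration.integrable_add integrable_abs integrable_const) auto
      show "w \<in> borel_measurable P" by (rule wm)
      show "AE \<xi> in P. norm (w \<xi>) \<le> norm (\<bar>\<phi> ((loss x \<xi> - (\<eta> - lam)) / lam)\<bar> + \<bar>\<phi> (a \<xi>)\<bar> + M)"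
      proof (rule AE_I2)
        fix \<xi>
        have "\<bar>\<phi> (a \<xi> + 1) - \<phi> (a \<xi>) - p (a \<xi>) * ((a \<xi> + 1) - a \<xi>)\<bar> \<le> M * ((a \<xi> + 1) - a \<xi>)^2"
          by (rule tay)
        then have "\<bar>\<phi> (a \<xi> + 1) - \<phi> (a \<xi>) - p (a \<xi>)\<bar> \<le> M" by simp
        then show "norm (w \<xi>) \<le> norm (\<bar>\<phi> ((loss x \<xi> - (\<eta> - lam)) / lam)\<bar> + \<bar>\<phi> (a \<xi>)\<bar> + M)"
          unfolding w_def a1[symmetric] using M0 by simp
      qed
    qed
    have int_wd: "integrable P (\<lambda>\<xi>. w \<xi> * (loss y \<xi> - loss x \<xi>))" if y: "y \<in> X" for y
    proof (rule Bochner_Integration.integrable_bound)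
      show "integrable P (\<lambda>\<xi>. (G * norm (y - x)) * w \<xi>)" using wint by simp
      show "(\<lambda>\<xi>. w \<xi> * (loss y \<xi> - loss x \<xi>)) \<in> borel_measurable P" using wm meas[OF y] meas[OF x] by simp
      show "AE \<xi> in P. norm (w \<xi> * (loss y \<xi> - loss x \<xi>)) \<le> norm ((G * norm (y - x)) * w \<xi>)"
      proof (rule AE_I2)
        fix \<xi> assume \<xi>: "\<xi> \<in> space P"
        have "\<bar>loss y \<xi> - loss x \<xi>\<bar> \<le> \<bar>G * norm (y - x)\<bar>" using lipb[OF \<xi> y x] by linarith
        then have "\<bar>w \<xi>\<bar> * \<bar>loss y \<xi> - loss x \<xi>\<bar> \<le> \<bar>w \<xi>\<bar> * \<bar>G * norm (y - x)\<bar>"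
          by (rule mult_left_mono) simp
        then show "norm (w \<xi> * (loss y \<xi> - loss x \<xi>)) \<le> norm ((G * norm (y - x)) * w \<xi>)"
          by (simp only: real_norm_def abs_mult[of "w \<xi>"] abs_mult[of "G * norm (y - x)"] mult.commute)
      qed
    qed
    have intphi: "integrable P (\<lambda>\<xi>. lam * \<phi> ((loss y \<xi> - e) / lam))" if "y \<in> X" for y e
      using integ[OF that] by simp
    (* first-order condition *)
    have ws: "(\<integral>\<xi>. w \<xi> \<partial>P) = 1"
    proof -
      have "(1 - (\<integral>\<xi>. w \<xi> \<partial>P)) * t + (M / lam) * t^2 \<ge> 0" for t
      proof -
        define g where "g \<xi> = lam * \<phi> ((loss x \<xi> - (\<eta> + t)) / lam)" for \<xi>
        define h where "h \<xi> = lam * \<phi> (a \<xi>) - t * w \<xi>" for \<xi>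
        have "\<bar>(\<integral>\<xi>. g \<xi> \<partial>P) - (\<integral>\<xi>. h \<xi> \<partial>P)\<bar> \<le> (M / lam) * t^2"
        proof (rule int_approx[OF P])
          show "integrable P g" unfolding g_def by (rule intphi[OF x])
          show "integrable P h" unfolding h_def a_def using intphi[OF x, of \<eta>] wint by simp
          fix \<xi>
          have e: "(loss x \<xi> - (\<eta> + t)) / lam = a \<xi> + (- t / lam)" using lam by (simp add: a_def field_simps)
          have "g \<xi> - h \<xi> = lam * (\<phi> (a \<xi> + (- t / lam)) - \<phi> (a \<xi>) - p (a \<xi>) * ((a \<xi> + (- t / lam)) - a \<xi>))"
            unfolding g_def h_def e w_def using lam by (simp add: field_simps)
          then have "\<bar>g \<xi> - h \<xi>\<bar> = lam * \<bar>\<phi> (a \<xi> + (- t / lam)) - \<phi> (a \<xi>) - p (a \<xi>) * ((a \<xi> + (- t / lam)) - a \<xi>)\<bar>"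
            using lam by (simp add: abs_mult)
          also have "\<dots> \<le> lam * (M * ((a \<xi> + (- t / lam)) - a \<xi>)^2)"
            by (intro mult_left_mono tay) (use lam in auto)
          also have "\<dots> = (M / lam) * t^2" using lam by (simp add: power2_eq_square field_simps)
          finally show "\<bar>g \<xi> - h \<xi>\<bar> \<le> (M / lam) * t^2" .
        qed
        moreover have "(\<integral>\<xi>. g \<xi> \<partial>P) = lam * J x (\<eta> + t)" unfolding g_def J_def by simp
        moreover have "(\<integral>\<xi>. h \<xi> \<partial>P) = lam * J x \<eta> - t * (\<integral>\<xi>. w \<xi> \<partial>P)"
          unfolding h_def J_def a_def
          by (subst Bochner_Integration.integral_diff) (use intphi[OF x, of \<eta>] wint in auto)
        moreover have "dro_L P lam \<phi> loss x \<eta> \<le> dro_L P lam \<phi> loss x (\<eta> + t)" using min by blast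
        ultimately show ?thesis
          unfolding Leq[OF x] J_def by (simp add: algebra_simps)
      qed
      then have "1 - (\<integral>\<xi>. w \<xi> \<partial>P) = 0"
        by (intro foc_zero[of "M / lam"]) (use M0 lam in auto)
      then show ?thesis by simp
    qed
    define F where "F y = (\<integral>\<xi>. w \<xi> * (loss y \<xi> - loss x \<xi>) \<partial>P)" for y
    have Fx: "F x = 0" unfolding F_def by simp
    have Q2: "dro_L P lam \<phi> loss x \<eta> + F y \<le> dro_L P lam \<phi> loss y e" if y: "y \<in> X" for y e
    proof -
      have "(\<integral>\<xi>. lam * \<phi> (a \<xi>) + w \<xi> * (loss y \<xi> - loss x \<xi>) - (e - \<eta>) * w \<xi> \<partial>P)
          \<le> (\<integral>\<xi>. lam * \<phi> ((loss y \<xi> - e) / lam) \<partial>P)"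
      proof (rule integral_mono)
        show "integrable P (\<lambda>\<xi>. lam * \<phi> (a \<xi>) + w \<xi> * (loss y \<xi> - loss x \<xi>) - (e - \<eta>) * w \<xi>)"
          unfolding a_def using intphi[OF x, of \<eta>] int_wd[OF y] wint by simp
        show "integrable P (\<lambda>\<xi>. lam * \<phi> ((loss y \<xi> - e) / lam))" by (rule intphi[OF y])
        fix \<xi>
        have e: "(loss y \<xi> - e) / lam - a \<xi> = ((loss y \<xi> - loss x \<xi>) - (e - \<eta>)) / lam"
          using lam by (simp add: a_def field_simps)
        have "\<phi> ((loss y \<xi> - e) / lam) \<ge> \<phi> (a \<xi>) + p (a \<xi>) * ((loss y \<xi> - e) / lam - a \<xi>)"
          by (rule tan)
        then have "\<phi> ((loss y \<xi> - e) / lam) \<ge> \<phi> (a \<xi>) + w \<xi> * (((loss y \<xi> - loss x \<xi>) - (e - \<eta>)) / lam)"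
          unfolding e w_def .
        then have "lam * \<phi> ((loss y \<xi> - e) / lam) \<ge> lam * (\<phi> (a \<xi>) + w \<xi> * (((loss y \<xi> - loss x \<xi>) - (e - \<eta>)) / lam))"
          using lam by (intro mult_left_mono) auto
        moreover have "lam * (\<phi> (a \<xi>) + w \<xi> * (((loss y \<xi> - loss x \<xi>) - (e - \<eta>)) / lam))
            = lam * \<phi> (a \<xi>) + w \<xi> * (loss y \<xi> - loss x \<xi>) - (e - \<eta>) * w \<xi>"
          using lam by (simp add: field_simps)
        ultimately show "lam * \<phi> (a \<xi>) + w \<xi> * (loss y \<xi> - loss x \<xi>) - (e - \<eta>) * w \<xi> \<le> lam * \<phi> ((loss y \<xi> - e) / lam)"
          by linarith
      qed
      moreover have "(\<integral>\<xi>. lam * \<phi> (a \<xi>) + w \<xi> * (loss y \<xi> - loss x \<xi>) - (e - \<eta>) * w \<xi> \<partial>P)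
          = lam * J x \<eta> + F y - (e - \<eta>)"
      proof -
        have "(\<integral>\<xi>. lam * \<phi> (a \<xi>) + w \<xi> * (loss y \<xi> - loss x \<xi>) - (e - \<eta>) * w \<xi> \<partial>P)
            = (\<integral>\<xi>. lam * \<phi> (a \<xi>) + w \<xi> * (loss y \<xi> - loss x \<xi>) \<partial>P) - (\<integral>\<xi>. (e - \<eta>) * w \<xi> \<partial>P)"
          by (rule Bochner_Integration.integral_diff) (use intphi[OF x, of \<eta>] int_wd[OF y] wint in \<open>auto simp: a_def\<close>)
        also have "(\<integral>\<xi>. lam * \<phi> (a \<xi>) + w \<xi> * (loss y \<xi> - loss x \<xi>) \<partial>P)
            = (\<integral>\<xi>. lam * \<phi> (a \<xi>) \<partial>P) + F y"
          unfolding F_def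
          by (rule Bochner_Integration.integral_add) (use intphi[OF x, of \<eta>] int_wd[OF y] in \<open>auto simp: a_def\<close>)
        finally show ?thesis using ws by (simp add: J_def a_def)
      qed
      ultimately have "lam * J x \<eta> + F y - (e - \<eta>) \<le> lam * J y e" unfolding J_def by simp
      then show ?thesis unfolding Leq[OF x] Leq[OF y] J_def by simp
    qed
    define K where "K = M * G^2 / lam"
    have Q1: "\<bar>dro_L P lam \<phi> loss y \<eta> - dro_L P lam \<phi> loss x \<eta> - F y\<bar> \<le> K * (norm (y - x))^2"
      if y: "y \<in> X" for y
    proof -
      define g where "g \<xi> = lam * \<phi> ((loss y \<xi> - \<eta>) / lam)" for \<xi>
      define h where "h \<xi> = lam * \<phi> (a \<xi>) + w \<xi> * (loss y \<xi> - loss x \<xi>)" for \<xi>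
      have "\<bar>(\<integral>\<xi>. g \<xi> \<partial>P) - (\<integral>\<xi>. h \<xi> \<partial>P)\<bar> \<le> K * (norm (y - x))^2"
      proof (rule int_approx[OF P])
        show "integrable P g" unfolding g_def by (rule intphi[OF y])
        show "integrable P h" unfolding h_def a_def using intphi[OF x, of \<eta>] int_wd[OF y] by simp
        fix \<xi> assume \<xi>: "\<xi> \<in> space P"
        define d where "d = loss y \<xi> - loss x \<xi>"
        have e: "(loss y \<xi> - \<eta>) / lam = a \<xi> + d / lam" using lam by (simp add: a_def d_def field_simps)
        have "g \<xi> - h \<xi> = lam * (\<phi> (a \<xi> + d / lam) - \<phi> (a \<xi>) - p (a \<xi>) * ((a \<xi> + d / lam) - a \<xi>))"
          unfolding g_def h_def e w_def d_def[symmetric] using lam by (simp add: field_simps)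
        then have "\<bar>g \<xi> - h \<xi>\<bar> = lam * \<bar>\<phi> (a \<xi> + d / lam) - \<phi> (a \<xi>) - p (a \<xi>) * ((a \<xi> + d / lam) - a \<xi>)\<bar>"
          using lam by (simp add: abs_mult)
        also have "\<dots> \<le> lam * (M * ((a \<xi> + d / lam) - a \<xi>)^2)"
          by (intro mult_left_mono tay) (use lam in auto)
        also have "\<dots> = M * d^2 / lam" using lam by (simp add: power2_eq_square field_simps)
        also have "\<dots> \<le> M * (G * norm (y - x))^2 / lam"
        proof -
          have "\<bar>d\<bar> \<le> G * norm (y - x)" unfolding d_def by (rule lipb[OF \<xi> y x])
          then have "d^2 \<le> (G * norm (y - x))^2"
            by (metis abs_ge_zero power2_abs power_mono)
          then show ?thesis using M0 lam by (intro divide_right_mono mult_left_mono) auto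
        qed
        also have "\<dots> = K * (norm (y - x))^2" by (simp add: K_def power_mult_distrib)
        finally show "\<bar>g \<xi> - h \<xi>\<bar> \<le> K * (norm (y - x))^2" .
      qed
      moreover have "(\<integral>\<xi>. g \<xi> \<partial>P) = lam * J y \<eta>" unfolding g_def J_def by simp
      moreover have "(\<integral>\<xi>. h \<xi> \<partial>P) = lam * J x \<eta> + F y"
        unfolding h_def J_def F_def a_def
        by (subst Bochner_Integration.integral_add) (use intphi[OF x, of \<eta>] int_wd[OF y] in auto)
      ultimately show ?thesis unfolding Leq[OF x] Leq[OF y] J_def by simp
    qed
    have Psix: "dro_Psi P lam \<phi> loss x = dro_L P lam \<phi> loss x \<eta>"
      unfolding dro_Psi_def by (rule cInf_eq_minimum) (use min in auto)
    have Psi_lo: "dro_Psi P lam \<phi> loss y \<ge> dro_L P lam \<phi> loss x \<eta> + F y" if "y \<in> X" for y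
      unfolding dro_Psi_def by (rule cINF_greatest) (use Q2[OF that] in auto)
    have Psi_up: "dro_Psi P lam \<phi> loss y \<le> dro_L P lam \<phi> loss y \<eta>" if "y \<in> X" for y
      unfolding dro_Psi_def by (rule cINF_lower) (use Q2[OF that] in \<open>auto intro!: bdd_belowI2\<close>)
    obtain A where A: "(F has_derivative (\<lambda>h. A \<bullet> h)) (at x within X)"
    proof -
      have "\<exists>A. ((\<lambda>y. \<integral>\<xi>. w \<xi> * (loss y \<xi> - loss x \<xi>) \<partial>P) has_derivative (\<lambda>h. A \<bullet> h)) (at x within X)"
      proof (rule core[OF x wint])
        show "(\<lambda>\<xi>. loss y \<xi>) \<in> borel_measurable P" if "y \<in> X" for y using meas[OF that] .
        show "\<bar>loss y \<xi> - loss x \<xi>\<bar> \<le> G * norm (y - x)" if "\<xi> \<in> space P" "y \<in> X" for \<xi> y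
          using lipb[OF that x] .
        fix \<xi> assume \<xi>: "\<xi> \<in> space P"
        from sm[OF \<xi>] obtain g where "\<forall>z\<in>X. ((\<lambda>y. loss y \<xi>) has_derivative (\<lambda>h. g z \<bullet> h)) (at z within X)"
          unfolding smooth_on_def by blast
        then show "\<exists>g. ((\<lambda>y. loss y \<xi>) has_derivative (\<lambda>h. g \<bullet> h)) (at x within X)" using x by blast
      qed
      then show ?thesis using that unfolding F_def by blast
    qed
    have LA: "((\<lambda>y. dro_L P lam \<phi> loss y \<eta>) has_derivative (\<lambda>h. A \<bullet> h)) (at x within X)"
    proof (rule deriv_transfer[OF A])
      fix y assume "y \<in> X"
      then show "\<bar>dro_L P lam \<phi> loss y \<eta> - dro_L P lam \<phi> loss x \<eta> - (F y - F x)\<bar> \<le> K * (norm (y - x))^2"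
        using Q1 Fx by simp
    qed
    have "(dro_Psi P lam \<phi> loss has_derivative D) (at x within X)"
      if D: "((\<lambda>y. dro_L P lam \<phi> loss y \<eta>) has_derivative D) (at x within X)" for D
    proof (rule deriv_transfer[OF D])
      fix y assume y: "y \<in> X"
      have "dro_Psi P lam \<phi> loss y - dro_Psi P lam \<phi> loss x \<le> dro_L P lam \<phi> loss y \<eta> - dro_L P lam \<phi> loss x \<eta>"
        using Psi_up[OF y] Psix by simp
      moreover have "dro_Psi P lam \<phi> loss y - dro_Psi P lam \<phi> loss x \<ge> F y"
        using Psi_lo[OF y] Psix by simp
      moreover have "dro_L P lam \<phi> loss y \<eta> - dro_L P lam \<phi> loss x \<eta> \<le> F y + K * (norm (y - x))^2"
        using Q1[OF y] by linarith
      ultimately show "\<bar>dro_Psi P lam \<phi> loss y - dro_Psi P lam \<phi> loss x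
          - (dro_L P lam \<phi> loss y \<eta> - dro_L P lam \<phi> loss x \<eta>)\<bar> \<le> K * (norm (y - x))^2"
        by linarith
    qed
    then show ?thesis using LA by blast
  qed
  show ?thesis
  proof (intro conjI ballI allI impI)
    fix x assume x: "x \<in> X"
    obtain \<eta> where "\<forall>\<eta>'. dro_L P lam \<phi> loss x \<eta> \<le> dro_L P lam \<phi> loss x \<eta>'" using attained[OF x] by blast
    from key[OF x this] show "dro_Psi P lam \<phi> loss differentiable (at x within X)"
      unfolding differentiable_def by blast
  next
    fix x \<eta> assume x: "x \<in> X" and mn: "\<forall>\<eta>'. dro_L P lam \<phi> loss x \<eta> \<le> dro_L P lam \<phi> loss x \<eta>'"
    from key[OF x mn] show "(\<lambda>y. dro_L P lam \<phi> loss y \<eta>) differentiable (at x within X)"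
      unfolding differentiable_def by blast
  next
    fix x \<eta> D assume x: "x \<in> X" and "\<forall>\<eta>'. dro_L P lam \<phi> loss x \<eta> \<le> dro_L P lam \<phi> loss x \<eta>'"
      and "((\<lambda>y. dro_L P lam \<phi> loss y \<eta>) has_derivative D) (at x within X)"
    with key[OF x] show "(dro_Psi P lam \<phi> loss has_derivative D) (at x within X)" by blast
  qed
qed


end
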